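(* Let $d\geq 1$. For every $d$-dimensional cube tiling $\mathcal{T}$ one has $m_2(\mathcal{T})\le m_2(\mathcal{R})$, where $\mathcal{R}$ is the regular cube tiling $\{z+[0,2[^d : z\in 2\mathbb{Z}^d\}$; i.e. the regular cube tiling has the highest second moment among cube tilings.
   Context: A $d$-dimensional cube tiling is a $4\mathbb{Z}^d$-invariant tiling of $\mathbb{R}^d$ by translates $y+[0,2[^d$ with $y\in\mathbb{Z}^d$. For $z\in\mathbb{Z}^d$, $N_z(\mathcal{T})$ is the number of cubes of $\mathcal{T}$ contained in $z+[0,4[^d$, and the second moment is $m_2(\mathcal{T})=4^{-d}\sum_{z\in\{0,1,2,3\}^d}N_z(\mathcal{T})^2$. *)

theory Defs
  imports "HOL-Analysis.Analysis"
begin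

text \<open>A tiling is represented by its set of translation vectors y in Z^d;
  the dimension d is CARD('n) of a finite index type.\<close>

definition cube :: "int ^ 'n \<Rightarrow> (real ^ 'n) set" where
  "cube y = {x. \<forall>i. real_of_int (y $ i) \<le> x $ i \<and> x $ i < real_of_int (y $ i) + 2}"

definition box4 :: "int ^ 'n \<Rightarrow> (real ^ 'n) set" where
  "box4 z = {x. \<forall>i. real_of_int (z $ i) \<le> x $ i \<and> x $ i < real_of_int (z $ i) + 4}"

definition cube_tiling :: "(int ^ 'n::finite) set \<Rightarrow> bool" where
  "cube_tiling T \<longleftrightarrow>
     (\<forall>x :: real ^ 'n. \<exists>!y. y \<in> T \<and> x \<in> cube y) \<and>
     (\<forall>y\<in>T. \<forall>k :: int ^ 'n. y + 4 * k \<in> T)"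

definition N_count :: "(int ^ 'n::finite) set \<Rightarrow> int ^ 'n \<Rightarrow> nat" where
  "N_count T z = card {y \<in> T. cube y \<subseteq> box4 z}"

definition second_moment :: "(int ^ 'n::finite) set \<Rightarrow> real" where
  "second_moment T = (1 / 4 ^ CARD('n)) *
     (\<Sum>z \<in> {z :: int ^ 'n. \<forall>i. z $ i \<in> {0..3}}. real (N_count T z) ^ 2)"

definition regular_tiling :: "(int ^ 'n::finite) set" where
  "regular_tiling = {z. \<forall>i. even (z $ i)}"

end

theory Submission
  imports Defs
begin


definition vset :: "('n::finite \<Rightarrow> 'a set) \<Rightarrow> ('a^'n) set" where
  "vset A = {v. \<forall>i. v$i \<in> A i}"

lemma vset_eq: "vset A = vec_lambda ` (PiE UNIV A)"
proof
  show "vset A \<subseteq> vec_lambda ` (PiE UNIV A)"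
  proof
    fix v assume "v \<in> vset A"
    then have "vec_nth v \<in> PiE UNIV A" by (auto simp: vset_def)
    then show "v \<in> vec_lambda ` (PiE UNIV A)" by (metis image_eqI vec_nth_inverse)
  qed
qed (auto simp: vset_def)

lemma inj_vec_lambda: "inj_on vec_lambda X"
  by (simp add: inj_on_def vec_lambda_inject)

lemma vset_finite: "(\<And>i. finite (A i)) \<Longrightarrow> finite (vset A)"
  unfolding vset_eq by (intro finite_imageI finite_PiE) auto

lemma vset_card: "card (vset (A::'n::finite \<Rightarrow> 'a set)) = (\<Prod>i\<in>UNIV. card (A i))"
  unfolding vset_eq by (subst card_image[OF inj_vec_lambda]) (simp add: card_PiE)

lemma vset_sum_prod:
  fixes h :: "'n::finite \<Rightarrow> 'a \<Rightarrow> 'c::comm_semiring_1"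
  assumes "\<And>i. finite (A i)"
  shows "(\<Sum>v\<in>vset A. \<Prod>i\<in>UNIV. h i (v$i)) = (\<Prod>i\<in>UNIV. \<Sum>a\<in>A i. h i a)"
  unfolding vset_eq
  by (subst sum.reindex[OF inj_vec_lambda]) (simp add: prod_sum_PiE assms)



definition w :: "int \<Rightarrow> nat" where "w c = nat (3 - \<bar>c\<bar>)"

lemma comb:
  fixes I :: "'a set"
  assumes "finite I"
  shows "finite D \<Longrightarrow> (\<forall>\<delta>\<in>D. \<forall>i\<in>I. \<bar>\<delta> i\<bar> \<le> (2::int)) \<Longrightarrow>
    (\<forall>\<delta>\<in>D. \<forall>\<delta>'\<in>D. \<delta> \<noteq> \<delta>' \<longrightarrow> (\<exists>i\<in>I. \<bar>\<delta> i - \<delta>' i\<bar> \<ge> 2)) \<Longrightarrow>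
    (\<Sum>\<delta>\<in>D. \<Prod>i\<in>I. w (\<delta> i)) \<le> 5 ^ card I"
  using assms
proof (induction I arbitrary: D rule: finite_induct)
  case empty
  then show ?case by (simp add: card_le_Suc0_iff_eq)
next
  case (insert j I)
  define \<Phi> where "\<Phi> X = (\<Sum>\<delta>\<in>X. \<Prod>i\<in>I. w (\<delta> i))" for X
  define Dc where "Dc c = {\<delta>\<in>D. \<delta> j = c}" for c
  have fin: "finite (Dc c)" for c using insert.prems(1) by (simp add: Dc_def)
  have pack: "\<Phi> (Dc a \<union> Dc b) \<le> 5 ^ card I" if ab: "\<bar>a - b\<bar> \<le> 1" for a b
    unfolding \<Phi>_def
  proof (rule insert.IH)
    show "finite (Dc a \<union> Dc b)" using fin by simp
    show "\<forall>\<delta>\<in>Dc a \<union> Dc b. \<forall>i\<in>I. \<bar>\<delta> i\<bar> \<le> 2" using insert.prems(2) by (auto simp: Dc_def)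
    show "\<forall>\<delta>\<in>Dc a \<union> Dc b. \<forall>\<delta>'\<in>Dc a \<union> Dc b. \<delta> \<noteq> \<delta>' \<longrightarrow> (\<exists>i\<in>I. 2 \<le> \<bar>\<delta> i - \<delta>' i\<bar>)"
    proof (intro ballI impI)
      fix \<delta> \<delta>' assume d: "\<delta> \<in> Dc a \<union> Dc b" "\<delta>' \<in> Dc a \<union> Dc b" "\<delta> \<noteq> \<delta>'"
      then obtain i where i: "i \<in> insert j I" "2 \<le> \<bar>\<delta> i - \<delta>' i\<bar>"
        using insert.prems(3) by (auto simp: Dc_def)
      have "\<bar>\<delta> j - \<delta>' j\<bar> \<le> 1" using d ab by (auto simp: Dc_def abs_minus_commute)
      then have "i \<noteq> j" using i by auto
      then show "\<exists>i\<in>I. 2 \<le> \<bar>\<delta> i - \<delta>' i\<bar>" using i by auto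
    qed
  qed
  have un: "\<Phi> (Dc a \<union> Dc b) = \<Phi> (Dc a) + \<Phi> (Dc b)" if "a \<noteq> b" for a b
    unfolding \<Phi>_def using that fin by (intro sum.union_disjoint) (auto simp: Dc_def)
  have "(\<Sum>\<delta>\<in>D. \<Prod>i\<in>insert j I. w (\<delta> i)) = (\<Sum>\<delta>\<in>D. w (\<delta> j) * (\<Prod>i\<in>I. w (\<delta> i)))"
    using insert.hyps by (intro sum.cong) auto
  also have "\<dots> = (\<Sum>c\<in>{-2..2}. \<Sum>\<delta>\<in>Dc c. w (\<delta> j) * (\<Prod>i\<in>I. w (\<delta> i)))"
    unfolding Dc_def
    by (rule sum.group[symmetric]) (use insert.prems in \<open>auto simp: abs_le_iff\<close>)
  also have "\<dots> = (\<Sum>c\<in>{-2..2}. w c * \<Phi> (Dc c))"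
    unfolding \<Phi>_def by (intro sum.cong refl) (auto simp: Dc_def sum_distrib_left)
  also have "{-2..2::int} = {-2,-1,0,1,2}" by auto
  also have "(\<Sum>c\<in>{-2,-1,0,1,2}. w c * \<Phi> (Dc c)) =
      \<Phi> (Dc (-2)) + 2 * \<Phi> (Dc (-1)) + 3 * \<Phi> (Dc 0) + 2 * \<Phi> (Dc 1) + \<Phi> (Dc 2)"
    by (simp add: w_def)
  also have "\<dots> = \<Phi> (Dc (-2) \<union> Dc (-1)) + \<Phi> (Dc (-1) \<union> Dc 0) + \<Phi> (Dc 0 \<union> Dc 1)
      + \<Phi> (Dc 1 \<union> Dc 2) + \<Phi> (Dc 0 \<union> Dc 0)"
    by (simp add: un)
  also have "\<dots> \<le> 5 * 5 ^ card I"
    using pack[of "-2" "-1"] pack[of "-1" 0] pack[of 0 1] pack[of 1 2] pack[of 0 0] by simp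
  also have "\<dots> = 5 ^ card (insert j I)" using insert.hyps by simp
  finally show ?case .
qed



lemma cube_sub: "cube y \<subseteq> box4 z \<longleftrightarrow> (\<forall>i. z$i \<le> y$i \<and> y$i \<le> z$i + 2)"
proof
  assume h: "cube y \<subseteq> box4 z"
  have q: "(\<chi> i. real_of_int (y$i)) \<in> cube y" by (simp add: cube_def)
  have p: "(\<chi> i. real_of_int (y$i) + 3/2) \<in> cube y" by (simp add: cube_def)
  show "\<forall>i. z$i \<le> y$i \<and> y$i \<le> z$i + 2"
  proof
    fix i
    have "real_of_int (z$i) \<le> real_of_int (y$i)" using h q by (auto simp: box4_def)
    moreover have "real_of_int (y$i) + 3/2 < real_of_int (z$i) + 4" using h p by (auto simp: box4_def)
    ultimately show "z$i \<le> y$i \<and> y$i \<le> z$i + 2" by linarith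
  qed
next
  assume h: "\<forall>i. z$i \<le> y$i \<and> y$i \<le> z$i + 2"
  show "cube y \<subseteq> box4 z"
  proof
    fix x assume x: "x \<in> cube y"
    have "real_of_int (z$i) \<le> x$i \<and> x$i < real_of_int (z$i) + 4" for i
    proof -
      have a: "real_of_int (z$i) \<le> real_of_int (y$i)" using h by simp
      have b: "real_of_int (y$i) \<le> real_of_int (z$i) + 2" using h
        by (metis of_int_add of_int_le_iff of_int_numeral)
      have c: "real_of_int (y$i) \<le> x$i \<and> x$i < real_of_int (y$i) + 2" using x by (simp add: cube_def)
      show ?thesis using a b c by linarith
    qed
    then show "x \<in> box4 z" by (simp add: box4_def)
  qed
qed

definition Bs :: "(int^'n::finite) set \<Rightarrow> int^'n \<Rightarrow> (int^'n) set" where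
  "Bs T z = {y\<in>T. \<forall>i. z$i \<le> y$i \<and> y$i \<le> z$i + 2}"

lemma N_eq: "N_count T z = card (Bs T z)"
  unfolding N_count_def Bs_def by (simp add: cube_sub)

lemma Bs_fin: "finite (Bs T z)"
proof (rule finite_subset)
  show "Bs T z \<subseteq> vset (\<lambda>i. {z$i..z$i+2})" by (auto simp: Bs_def vset_def)
qed (rule vset_finite, simp)

lemma disj:
  fixes T :: "(int^'n::finite) set"
  assumes "cube_tiling T" "y \<in> T" "y' \<in> T" "\<forall>i. \<bar>y$i - y'$i\<bar> \<le> 1"
  shows "y = y'"
proof -
  define x :: "real^'n" where "x = (\<chi> i. real_of_int (max (y$i) (y'$i)) + 1/2)"
  have m: "y$i \<le> max (y$i) (y'$i) \<and> max (y$i) (y'$i) \<le> y$i + 1 \<and>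
      y'$i \<le> max (y$i) (y'$i) \<and> max (y$i) (y'$i) \<le> y'$i + 1" for i
    using assms(4)[rule_format, of i] by (auto simp: abs_le_iff)
  have r: "real_of_int (y$i) \<le> real_of_int (max (y$i) (y'$i)) \<and>
      real_of_int (max (y$i) (y'$i)) \<le> real_of_int (y$i) + 1 \<and>
      real_of_int (y'$i) \<le> real_of_int (max (y$i) (y'$i)) \<and>
      real_of_int (max (y$i) (y'$i)) \<le> real_of_int (y'$i) + 1" for i
    using m[of i] by (metis of_int_le_iff of_int_add of_int_1)
  have c: "real_of_int (y$i) \<le> x$i \<and> x$i < real_of_int (y$i) + 2 \<and>
     real_of_int (y'$i) \<le> x$i \<and> x$i < real_of_int (y'$i) + 2" for i
    unfolding x_def vec_lambda_beta using r[of i] by linarith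
  have "x \<in> cube y" "x \<in> cube y'" unfolding cube_def using c by auto
  then show ?thesis using assms(1-3) unfolding cube_tiling_def by blast
qed

lemma periodic: "cube_tiling T \<Longrightarrow> y \<in> T \<Longrightarrow> y + 4 * k \<in> T"
  unfolding cube_tiling_def by blast

lemma N_periodic:
  assumes "cube_tiling T"
  shows "card (Bs T (z + 4 * k)) = card (Bs T z)"
proof -
  have "Bs T (z + 4 * k) = (\<lambda>y. y + 4 * k) ` Bs T z"
  proof
    show "Bs T (z + 4 * k) \<subseteq> (\<lambda>y. y + 4 * k) ` Bs T z"
    proof
      fix y assume y: "y \<in> Bs T (z + 4 * k)"
      have "y + 4 * (- k) \<in> T" using y periodic[OF assms, of y "-k"] by (auto simp: Bs_def)
      moreover have "y + 4 * (- k) = y - 4 * k" by (simp add: vec_eq_iff)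
      ultimately have "y - 4 * k \<in> T" by simp
      moreover have "\<forall>i. z$i \<le> (y - 4 * k)$i \<and> (y - 4 * k)$i \<le> z$i + 2"
      proof
        fix i
        from y have "z$i + (4 * k)$i \<le> y$i \<and> y$i \<le> z$i + (4 * k)$i + 2" by (simp add: Bs_def)
        then show "z$i \<le> (y - 4 * k)$i \<and> (y - 4 * k)$i \<le> z$i + 2" by simp
      qed
      ultimately have "y - 4 * k \<in> Bs T z" by (simp add: Bs_def)
      then show "y \<in> (\<lambda>y. y + 4 * k) ` Bs T z" by (rule rev_image_eqI) simp
    qed
    show "(\<lambda>y. y + 4 * k) ` Bs T z \<subseteq> Bs T (z + 4 * k)"
      using periodic[OF assms] by (auto simp: Bs_def)
  qed
  then show ?thesis by (simp add: card_image inj_on_def)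
qed



lemma wcard:
  fixes t y :: int
  assumes "\<bar>y - t\<bar> \<le> 2"
  shows "card {a\<in>{0..2}. t - a \<le> y \<and> y \<le> t - a + 2} = w (y - t)"
proof -
  have "{a\<in>{0..2}. t - a \<le> y \<and> y \<le> t - a + 2} = {max 0 (t - y) .. min 2 (t - y + 2)}"
    by auto
  then show ?thesis using assms by (simp add: w_def max_def min_def abs_if) (auto simp: algebra_simps)
qed

lemma local_bound:
  fixes T :: "(int^'n::finite) set"
  assumes tl: "cube_tiling T"
  shows "(\<Sum>s\<in>vset (\<lambda>_. {0..2}). card (Bs T (t - s))) \<le> 5 ^ CARD('n)"
proof -
  define S :: "(int^'n) set" where "S = vset (\<lambda>_. {0..2})"
  define E where "E = {y\<in>T. \<forall>i. \<bar>y$i - t$i\<bar> \<le> 2}"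
  have finS: "finite S" unfolding S_def by (rule vset_finite) simp
  have finE: "finite E"
  proof (rule finite_subset)
    have b: "t$i - 2 \<le> y$i \<and> y$i \<le> t$i + 2" if "y \<in> E" for y i
    proof -
      from that have "\<bar>y$i - t$i\<bar> \<le> 2" by (simp add: E_def)
      then show ?thesis by (auto simp: abs_le_iff)
    qed
    show "E \<subseteq> vset (\<lambda>i. {t$i-2..t$i+2})" using b by (auto simp: vset_def)
  qed (rule vset_finite, simp)
  have sub: "Bs T (t - s) \<subseteq> E" if "s \<in> S" for s
  proof
    fix y assume y: "y \<in> Bs T (t - s)"
    have "\<bar>y$i - t$i\<bar> \<le> 2" for i
    proof -
      have "0 \<le> s$i \<and> s$i \<le> 2" using that by (simp add: S_def vset_def)
      moreover have "t$i - s$i \<le> y$i \<and> y$i \<le> t$i - s$i + 2" using y by (simp add: Bs_def)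
      ultimately show ?thesis unfolding abs_le_iff by linarith
    qed
    then show "y \<in> E" using y by (simp add: E_def Bs_def)
  qed
  have c1: "card (Bs T (t - s)) = (\<Sum>y\<in>E. if y \<in> Bs T (t - s) then 1 else 0)" if "s \<in> S" for s
  proof -
    have "Bs T (t - s) = {y\<in>E. y \<in> Bs T (t - s)}" using sub[OF that] by auto
    then have "card (Bs T (t - s)) = (\<Sum>y\<in>{y\<in>E. y \<in> Bs T (t - s)}. 1)" by simp
    also have "\<dots> = (\<Sum>y\<in>E. if y \<in> Bs T (t - s) then 1 else 0)"
      by (rule sum.inter_filter[OF finE])
    finally show ?thesis .
  qed
  have c2: "(\<Sum>s\<in>S. if y \<in> Bs T (t - s) then 1 else 0) = (\<Prod>i\<in>UNIV. w (y$i - t$i))"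
    if y: "y \<in> E" for y
  proof -
    have "(\<Sum>s\<in>S. if y \<in> Bs T (t - s) then 1 else 0) = (\<Sum>s\<in>{s\<in>S. y \<in> Bs T (t - s)}. 1::nat)"
      by (rule sum.inter_filter[OF finS, symmetric])
    also have "{s\<in>S. y \<in> Bs T (t - s)} = vset (\<lambda>i. {a\<in>{0..2}. t$i - a \<le> y$i \<and> y$i \<le> t$i - a + 2})"
      using y by (auto simp: S_def vset_def Bs_def E_def)
    also have "(\<Sum>s\<in>\<dots>. 1::nat) = (\<Prod>i\<in>UNIV. card {a\<in>{0..2}. t$i - a \<le> y$i \<and> y$i \<le> t$i - a + 2})"
      by (simp add: vset_card)
    also have "\<dots> = (\<Prod>i\<in>UNIV. w (y$i - t$i))"
      using y by (intro prod.cong refl wcard) (auto simp: E_def)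
    finally show ?thesis .
  qed
  have "(\<Sum>s\<in>S. card (Bs T (t - s))) = (\<Sum>s\<in>S. \<Sum>y\<in>E. if y \<in> Bs T (t - s) then 1 else 0)"
    using c1 by (intro sum.cong) auto
  also have "\<dots> = (\<Sum>y\<in>E. \<Sum>s\<in>S. if y \<in> Bs T (t - s) then 1 else 0)"
    by (rule sum.swap)
  also have "\<dots> = (\<Sum>y\<in>E. \<Prod>i\<in>UNIV. w (y$i - t$i))"
    using c2 by (intro sum.cong) auto
  also have "\<dots> = (\<Sum>\<delta>\<in>(\<lambda>y i. y$i - t$i) ` E. \<Prod>i\<in>UNIV. w (\<delta> i))"
  proof (rule sum.reindex[symmetric, unfolded comp_def])
    show "inj_on (\<lambda>y i. y$i - t$i) E"
    proof (rule inj_onI)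
      fix y y' assume "(\<lambda>i. y$i - t$i) = (\<lambda>i. y'$i - t$i)"
      then have "y$i = y'$i" for i by (metis add_diff_cancel_right' diff_add_cancel)
      then show "y = y'" by (simp add: vec_eq_iff)
    qed
  qed
  also have "\<dots> \<le> 5 ^ card (UNIV :: 'n set)"
  proof (rule comb)
    show "\<forall>\<delta>\<in>(\<lambda>y i. y$i - t$i) ` E. \<forall>i\<in>UNIV. \<bar>\<delta> i\<bar> \<le> 2" by (auto simp: E_def)
    show "\<forall>\<delta>\<in>(\<lambda>y i. y$i - t$i) ` E. \<forall>\<delta>'\<in>(\<lambda>y i. y$i - t$i) ` E. \<delta> \<noteq> \<delta>' \<longrightarrow> (\<exists>i\<in>UNIV. 2 \<le> \<bar>\<delta> i - \<delta>' i\<bar>)"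
    proof (clarify)
      fix y y' assume yy: "y \<in> E" "y' \<in> E" "(\<lambda>i. y$i - t$i) \<noteq> (\<lambda>i. y'$i - t$i)"
      show "\<exists>i\<in>UNIV. 2 \<le> \<bar>y$i - t$i - (y'$i - t$i)\<bar>"
      proof (rule ccontr)
        assume "\<not> ?thesis"
        then have n2: "\<not> 2 \<le> \<bar>y$i - y'$i\<bar>" for i by auto
        have "\<bar>y$i - y'$i\<bar> \<le> 1" for i using n2[of i] by linarith
        then have "\<forall>i. \<bar>y$i - y'$i\<bar> \<le> 1" by blast
        then have "y = y'" using disj[OF tl] yy(1,2) by (auto simp: E_def)
        then show False using yy(3) by simp
      qed
    qed
  qed (use finE in auto)
  finally show ?thesis unfolding S_def by simp
qed

lemma div2_close:
  fixes a b :: int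
  assumes "a div 2 = b div 2"
  shows "\<bar>a - b\<bar> \<le> 1"
proof -
  have "a = 2*(a div 2) + a mod 2" "b = 2*(b div 2) + b mod 2" by simp_all
  moreover have "0 \<le> a mod 2" "a mod 2 < 2" "0 \<le> b mod 2" "b mod 2 < 2" by simp_all
  ultimately show ?thesis using assms unfolding abs_le_iff by linarith
qed

lemma div2_range:
  fixes a :: int
  assumes "0 \<le> a" "a \<le> 3"
  shows "0 \<le> a div 2 \<and> a div 2 \<le> 1"
proof -
  have "a = 2*(a div 2) + a mod 2" by simp
  moreover have "0 \<le> a mod 2" "a mod 2 < 2" by simp_all
  ultimately show ?thesis using assms by linarith
qed

lemma T0_card:
  fixes T :: "(int^'n::finite) set"
  assumes tl: "cube_tiling T"
  shows "card (T \<inter> vset (\<lambda>_. {0..3})) \<le> 2 ^ CARD('n)"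
proof -
  have "card (T \<inter> vset (\<lambda>_. {0..3})) \<le> card (vset (\<lambda>_::'n. {0..1::int}))"
  proof (rule card_inj_on_le)
    show "inj_on (\<lambda>y. \<chi> i. y$i div 2) (T \<inter> vset (\<lambda>_. {0..3}))"
    proof (rule inj_onI)
      fix y y' assume yy: "y \<in> T \<inter> vset (\<lambda>_. {0..3})" "y' \<in> T \<inter> vset (\<lambda>_. {0..3})"
        and eq: "(\<chi> i. y$i div 2) = (\<chi> i. y'$i div 2)"
      have "y$i div 2 = y'$i div 2" for i using eq by (metis vec_lambda_beta)
      then have "\<forall>i. \<bar>y$i - y'$i\<bar> \<le> 1" using div2_close by blast
      then show "y = y'" using disj[OF tl] yy by auto
    qed
    show "(\<lambda>y. \<chi> i. y$i div 2) ` (T \<inter> vset (\<lambda>_. {0..3})) \<subseteq> vset (\<lambda>_. {0..1})"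
      using div2_range by (auto simp: vset_def)
    show "finite (vset (\<lambda>_::'n. {0..1::int}))" by (rule vset_finite) simp
  qed
  also have "\<dots> = 2 ^ CARD('n)" by (simp add: vset_card)
  finally show ?thesis .
qed



lemma modeq_close:
  fixes a b c c' :: int
  assumes "a mod 4 = b mod 4" "a - c = b - c'" "0 \<le> c" "c \<le> 3" "0 \<le> c'" "c' \<le> 3"
  shows "c = c'"
  using assms by presburger

lemma mod4_comp:
  fixes y z :: int
  shows "y mod 4 - (y - z) = z + 4 * - (y div 4)"
  using div_mult_mod_eq[of y 4] by linarith

lemma mod4_comp2:
  fixes y :: int
  shows "y + 4 * - (y div 4) = y mod 4"
  using div_mult_mod_eq[of y 4] by linarith

lemma mod4_comp3:
  fixes y :: int
  shows "y - 4 * (y div 4) = y mod 4"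
  using div_mult_mod_eq[of y 4] by linarith

lemma mod4_le:
  fixes y :: int
  shows "y mod 4 \<le> 3"
  using pos_mod_bound[of 4 y] by linarith

lemma main_bound:
  fixes T :: "(int^'n::finite) set"
  assumes tl: "cube_tiling T"
  shows "(\<Sum>z\<in>vset (\<lambda>_. {0..3::int}). card (Bs T z) ^ 2) \<le> 10 ^ CARD('n)"
proof -
  define Z :: "(int^'n) set" where "Z = vset (\<lambda>_. {0..3})"
  define S :: "(int^'n) set" where "S = vset (\<lambda>_. {0..2})"
  define T0 where "T0 = T \<inter> Z"
  define \<phi> where "\<phi> p = ((\<chi> i. snd p $ i mod 4) :: int^'n, snd p - fst p)" for p :: "(int^'n) \<times> (int^'n)"
  define G where "G q = card (Bs T (fst q - snd q))" for q :: "(int^'n) \<times> (int^'n)"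
  have finZ: "finite Z" unfolding Z_def by (rule vset_finite) simp
  have finS: "finite S" unfolding S_def by (rule vset_finite) simp
  have finT0: "finite T0" unfolding T0_def using finZ by simp
  have key: "G (\<phi> (z, y)) = card (Bs T z)" if "z \<in> Z" "y \<in> Bs T z" for z y
  proof -
    have eq: "(\<chi> i. y $ i mod 4) - (y - z) = z + 4 * (\<chi> i. - (y$i div 4))"
      by (simp add: vec_eq_iff mod4_comp)
    have "G (\<phi> (z, y)) = card (Bs T ((\<chi> i. y $ i mod 4) - (y - z)))" by (simp add: G_def \<phi>_def)
    also have "\<dots> = card (Bs T (z + 4 * (\<chi> i. - (y$i div 4))))" by (simp only: eq)
    also have "\<dots> = card (Bs T z)" by (rule N_periodic[OF tl])
    finally show ?thesis .
  qed
  have inj: "inj_on \<phi> (Sigma Z (Bs T))"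
  proof (rule inj_onI)
    fix p p' assume p: "p \<in> Sigma Z (Bs T)" and p': "p' \<in> Sigma Z (Bs T)" and eq: "\<phi> p = \<phi> p'"
    obtain z y where zy: "p = (z, y)" by (cases p)
    obtain z' y' where zy': "p' = (z', y')" by (cases p')
    have e1a: "\<forall>i. y$i mod 4 = y'$i mod 4" using eq unfolding zy zy' \<phi>_def
      by (simp add: vec_eq_iff)
    have e1: "y$i mod 4 = y'$i mod 4" for i using e1a by blast
    have e2: "y - z = y' - z'" using eq unfolding zy zy' \<phi>_def by simp
    have "z$i = z'$i" for i
    proof (rule modeq_close[OF e1[of i]])
      show "y$i - z$i = y'$i - z'$i" using e2 by (metis vector_minus_component)
      show "0 \<le> z$i" "z$i \<le> 3" using p unfolding zy Z_def vset_def by auto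
      show "0 \<le> z'$i" "z'$i \<le> 3" using p' unfolding zy' Z_def vset_def by auto
    qed
    then have "z = z'" by (simp add: vec_eq_iff)
    with e2 have "y = y'" by simp
    with \<open>z = z'\<close> show "p = p'" using zy zy' by simp
  qed
  have img: "\<phi> ` Sigma Z (Bs T) \<subseteq> T0 \<times> S"
  proof (rule image_subsetI)
    fix p assume "p \<in> Sigma Z (Bs T)"
    then obtain z y where pzy: "p = (z, y)" and z: "z \<in> Z" and y: "y \<in> Bs T z" by blast
    have "y + 4 * (\<chi> i. - (y$i div 4)) = (\<chi> i. y $ i mod 4)"
      by (simp add: vec_eq_iff mod4_comp2 mod4_comp3)
    moreover have "y \<in> T" using y by (simp add: Bs_def)
    ultimately have "(\<chi> i. y $ i mod 4) \<in> T" using periodic[OF tl] by metis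
    moreover have "(\<chi> i. y $ i mod 4) \<in> Z" by (simp add: Z_def vset_def mod4_le)
    moreover have "y - z \<in> S"
    proof -
      have "z$i \<le> y$i \<and> y$i \<le> z$i + 2" for i using y by (simp add: Bs_def)
      then have "0 \<le> (y - z)$i \<and> (y - z)$i \<le> 2" for i by (simp add: algebra_simps)
      then show ?thesis by (simp add: S_def vset_def)
    qed
    ultimately show "\<phi> p \<in> T0 \<times> S" by (simp add: pzy \<phi>_def T0_def)
  qed
  have "(\<Sum>z\<in>Z. card (Bs T z)^2) = (\<Sum>z\<in>Z. \<Sum>y\<in>Bs T z. card (Bs T z))"
    by (simp add: power2_eq_square)
  also have "\<dots> = (\<Sum>(z, y)\<in>Sigma Z (Bs T). card (Bs T z))"
    by (rule sum.Sigma) (auto simp: finZ Bs_fin)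
  also have "\<dots> = (\<Sum>p\<in>Sigma Z (Bs T). G (\<phi> p))"
    by (rule sum.cong) (auto simp: key)
  also have "\<dots> = (\<Sum>q\<in>\<phi> ` Sigma Z (Bs T). G q)"
    by (rule sum.reindex[OF inj, symmetric, unfolded comp_def])
  also have "\<dots> \<le> (\<Sum>q\<in>T0 \<times> S. G q)"
    by (rule sum_mono2) (use img finT0 finS in auto)
  also have "\<dots> = (\<Sum>t\<in>T0. \<Sum>s\<in>S. G (t, s))"
    by (simp add: sum.cartesian_product)
  also have "\<dots> \<le> (\<Sum>t\<in>T0. 5 ^ CARD('n))"
  proof (rule sum_mono)
    fix t assume "t \<in> T0"
    show "(\<Sum>s\<in>S. G (t, s)) \<le> 5 ^ CARD('n)"
      using local_bound[OF tl, of t] unfolding G_def S_def by simp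
  qed
  also have "\<dots> = card T0 * 5 ^ CARD('n)" by simp
  also have "\<dots> \<le> 2 ^ CARD('n) * 5 ^ CARD('n)"
    using T0_card[OF tl] unfolding T0_def Z_def by simp
  also have "\<dots> = 10 ^ CARD('n)" by (simp add: power_mult_distrib[symmetric])
  finally show ?thesis unfolding Z_def .
qed

lemma reg:
  "(\<Sum>z\<in>vset (\<lambda>_. {0..3::int}). card (Bs (regular_tiling :: (int^'n::finite) set) z) ^ 2) = 10 ^ CARD('n)"
proof -
  define r where "r c = card {a::int. even a \<and> c \<le> a \<and> a \<le> c + 2}" for c
  have c: "card (Bs (regular_tiling :: (int^'n) set) z) = (\<Prod>i\<in>UNIV. r (z$i))" for z :: "int^'n"
  proof -
    have "Bs regular_tiling z = vset (\<lambda>i. {a. even a \<and> z$i \<le> a \<and> a \<le> z$i + 2})"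
      by (auto simp: Bs_def vset_def regular_tiling_def)
    then show ?thesis by (simp add: vset_card r_def)
  qed
  have r0: "r 0 = 2"
  proof -
    have "{a::int. even a \<and> 0 \<le> a \<and> a \<le> 0 + 2} = {0, 2}" by (auto; presburger)
    then show ?thesis by (simp add: r_def)
  qed
  have r1: "r 1 = 1"
  proof -
    have "{a::int. even a \<and> 1 \<le> a \<and> a \<le> 1 + 2} = {2}" by (auto; presburger)
    then show ?thesis by (simp add: r_def)
  qed
  have r2: "r 2 = 2"
  proof -
    have "{a::int. even a \<and> 2 \<le> a \<and> a \<le> 2 + 2} = {2, 4}" by (auto; presburger)
    then show ?thesis by (simp add: r_def)
  qed
  have r3: "r 3 = 1"
  proof -
    have "{a::int. even a \<and> 3 \<le> a \<and> a \<le> 3 + 2} = {4}" by (auto; presburger)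
    then show ?thesis by (simp add: r_def)
  qed
  have s10: "(\<Sum>a\<in>{0..3::int}. r a ^ 2) = 10"
  proof -
    have "{0..3::int} = {0,1,2,3}" by auto
    then show ?thesis by (simp add: r0 r1 r2 r3)
  qed
  have "(\<Sum>z\<in>vset (\<lambda>_. {0..3::int}). card (Bs (regular_tiling :: (int^'n) set) z) ^ 2)
      = (\<Sum>z\<in>vset (\<lambda>_::'n. {0..3::int}). \<Prod>i\<in>UNIV. r (z$i) ^ 2)"
    by (simp add: c prod_power_distrib)
  also have "\<dots> = (\<Prod>i\<in>(UNIV::'n set). \<Sum>a\<in>{0..3::int}. r a ^ 2)"
    by (rule vset_sum_prod) simp
  also have "\<dots> = 10 ^ CARD('n)" by (simp add: s10)
  finally show ?thesis .
qed

theorem theorem4: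
  fixes T :: "(int ^ 'n::finite) set"
  assumes "cube_tiling T"
  shows "second_moment T \<le> second_moment (regular_tiling :: (int ^ 'n) set)"
proof -
  have Zeq: "{z :: int ^ 'n. \<forall>i. z $ i \<in> {0..3}} = vset (\<lambda>_. {0..3})" by (simp add: vset_def)
  have "(\<Sum>z\<in>vset (\<lambda>_. {0..3::int}). card (Bs T z) ^ 2)
      \<le> (\<Sum>z\<in>vset (\<lambda>_. {0..3::int}). card (Bs (regular_tiling :: (int^'n) set) z) ^ 2)"
    using main_bound[OF assms] reg[where 'n='n] by simp
  then have "real (\<Sum>z\<in>vset (\<lambda>_. {0..3::int}). card (Bs T z) ^ 2)
      \<le> real (\<Sum>z\<in>vset (\<lambda>_. {0..3::int}). card (Bs (regular_tiling :: (int^'n) set) z) ^ 2)"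
    by (rule of_nat_mono)
  then have "(\<Sum>z\<in>vset (\<lambda>_. {0..3::int}). real (card (Bs T z)) ^ 2)
      \<le> (\<Sum>z\<in>vset (\<lambda>_. {0..3::int}). real (card (Bs (regular_tiling :: (int^'n) set) z)) ^ 2)"
    by simp
  then show ?thesis unfolding second_moment_def Zeq N_eq
    by (intro mult_left_mono) auto
qed

end
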